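(* An orientation $O$ of an interval hypergraph $\mathcal{I}$ on $[n]$ is acyclic if and only if there are no $I,J\in\mathcal{I}$ with $O(I)\in J\setminus\{O(J)\}$ and $O(J)\in I\setminus\{O(I)\}$.
   Context: An interval hypergraph $\mathcal{I}$ on $[n]$ is a collection of intervals $[i,j]=\{i,\dots,j\}$ of $[n]$ containing all singletons. An orientation is a map $O:\mathcal{I}\to[n]$ with $O(I)\in I$ for all $I$; it is acyclic if there are no $H_1,\dots,H_k\in\mathcal{I}$, $k\ge2$, with $O(H_{i+1})\in H_i\setminus\{O(H_i)\}$ for $i\in[k-1]$ and $O(H_1)\in H_k\setminus\{O(H_k)\}$. *)

theory Defs
  imports Main
begin

definition interval_hypergraph :: "nat \<Rightarrow> nat set set \<Rightarrow> bool" where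
  "interval_hypergraph n \<I> \<longleftrightarrow>
     (\<forall>I\<in>\<I>. \<exists>i j. 1 \<le> i \<and> i \<le> j \<and> j \<le> n \<and> I = {i..j}) \<and>
     (\<forall>i\<in>{1..n}. {i} \<in> \<I>)"

definition orientation :: "nat set set \<Rightarrow> (nat set \<Rightarrow> nat) \<Rightarrow> bool" where
  "orientation \<I> Or \<longleftrightarrow> (\<forall>I\<in>\<I>. Or I \<in> I)"

definition acyclic_orientation :: "nat set set \<Rightarrow> (nat set \<Rightarrow> nat) \<Rightarrow> bool" where
  "acyclic_orientation \<I> Or \<longleftrightarrow>
     \<not> (\<exists>Hs. 2 \<le> length Hs \<and> set Hs \<subseteq> \<I> \<and>
          (\<forall>i. i + 1 < length Hs \<longrightarrow> Or (Hs ! (i + 1)) \<in> Hs ! i - {Or (Hs ! i)}) \<and>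
          Or (Hs ! 0) \<in> last Hs - {Or (last Hs)})"

end

theory Submission
  imports Defs
begin

lemma convex_mem:
  assumes "interval_hypergraph n \<I>" "I \<in> \<I>" "x \<in> I" "y \<in> I" "x \<le> z" "z \<le> y"
  shows "z \<in> I"
proof -
  from assms(1,2) obtain i j where "I = {i..j}" unfolding interval_hypergraph_def by blast
  with assms show ?thesis by auto
qed

lemma rotate_cycle:
  fixes f :: "nat \<Rightarrow> nat set"
  assumes "0 < k" "\<forall>i<k. f i \<in> \<I>"
    "\<forall>i<k. Or (f (Suc i mod k)) \<in> f i - {Or (f i)}"
  shows "\<forall>i<k. f ((i + r) mod k) \<in> \<I>"
    "\<forall>i<k. Or (f ((Suc i mod k + r) mod k)) \<in> f ((i + r) mod k) - {Or (f ((i + r) mod k))}"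
proof -
  show "\<forall>i<k. f ((i + r) mod k) \<in> \<I>" using assms by simp
  show "\<forall>i<k. Or (f ((Suc i mod k + r) mod k)) \<in> f ((i + r) mod k) - {Or (f ((i + r) mod k))}"
  proof (intro allI impI)
    fix i assume "i < k"
    have e: "(Suc i mod k + r) mod k = Suc ((i + r) mod k) mod k"
      by (simp add: mod_add_left_eq mod_Suc_eq)
    have "(i + r) mod k < k" using assms(1) by simp
    then show "Or (f ((Suc i mod k + r) mod k)) \<in> f ((i + r) mod k) - {Or (f ((i + r) mod k))}"
      using assms(3) e by metis
  qed
qed

lemma main_cycle:
  assumes ih: "interval_hypergraph n \<I>" and ori: "orientation \<I> Or"
  shows "\<And>f. 2 \<le> k \<Longrightarrow> \<forall>i<k. f i \<in> \<I> \<Longrightarrow>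
    \<forall>i<k. Or (f (Suc i mod k)) \<in> f i - {Or (f i)} \<Longrightarrow>
    \<exists>I\<in>\<I>. \<exists>J\<in>\<I>. Or I \<in> J - {Or J} \<and> Or J \<in> I - {Or I}"
proof (induction k rule: less_induct)
  case (less k f)
  show ?case
  proof (cases "k = 2")
    case True
    show ?thesis
    proof -
      have "f 0 \<in> \<I>" "f 1 \<in> \<I>" using less.prems(2) True by auto
      moreover have "Or (f 1) \<in> f 0 - {Or (f 0)}" "Or (f 0) \<in> f 1 - {Or (f 1)}"
        using spec[OF less.prems(3), of 0] spec[OF less.prems(3), of 1] True by auto
      ultimately show ?thesis by blast
    qed
  next
    case False
    then have k3: "3 \<le> k" using less.prems(1) by simp
    define M where "M = Max ((\<lambda>i. Or (f i)) ` {..<k})"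
    have ne: "{..<k} \<noteq> {}"
    proof
      assume "{..<k} = {}"
      moreover have "0 \<in> {..<k}" using k3 by simp
      ultimately show False by simp
    qed
    have "M \<in> (\<lambda>i. Or (f i)) ` {..<k}" unfolding M_def using ne
      by (intro Max_in) auto
    then obtain m where m: "m < k" "Or (f m) = M" by auto
    have mx: "\<forall>i<k. Or (f i) \<le> M" unfolding M_def by auto
    define r where "r = (m + k - 1) mod k"
    define g where "g i = f ((i + r) mod k)" for i
    have gI: "\<forall>i<k. g i \<in> \<I>" and garc: "\<forall>i<k. Or (g (Suc i mod k)) \<in> g i - {Or (g i)}"
      using rotate_cycle[OF _ less.prems(2,3), of r] k3 unfolding g_def by auto
    have g1: "g 1 = f m"
    proof -
      have "(1 + r) mod k = (1 + (m + k - 1)) mod k" by (simp only: r_def mod_add_right_eq)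
      also have "1 + (m + k - 1) = m + k" using k3 by simp
      also have "(m + k) mod k = m" using m(1) by simp
      finally show ?thesis unfolding g_def by simp
    qed
    have gmx: "\<forall>i<k. Or (g i) \<le> Or (g 1)"
    proof (intro allI impI)
      fix i assume "i < k"
      have "(i + r) mod k < k" using k3 by simp
      then have "Or (g i) \<le> M" using mx unfolding g_def by blast
      then show "Or (g i) \<le> Or (g 1)" using g1 m(2) by simp
    qed
    have a01: "Or (g 1) \<in> g 0 - {Or (g 0)}"
    proof -
      have "Suc 0 mod k = 1" using k3 by simp
      moreover have "0 < k" using k3 by simp
      ultimately show ?thesis using spec[OF garc, of 0] by simp
    qed
    have a12: "Or (g 2) \<in> g 1 - {Or (g 1)}"
    proof -
      have "Suc 1 mod k = 2" "(1::nat) < k" using k3 by auto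
      then show ?thesis using spec[OF garc, of 1] by (simp add: numeral_2_eq_2)
    qed
    have g0I: "g 0 \<in> \<I>" and g1I: "g 1 \<in> \<I>" and g2I: "g 2 \<in> \<I>" using gI k3 by auto
    have p0: "Or (g 0) \<in> g 0" and p1: "Or (g 1) \<in> g 1" and p2: "Or (g 2) \<in> g 2"
      using ori g0I g1I g2I unfolding orientation_def by auto
    have le0: "Or (g 0) \<le> Or (g 1)" using gmx k3 by auto
    consider "Or (g 2) = Or (g 0)" | "Or (g 2) < Or (g 0)" | "Or (g 0) < Or (g 2)" by linarith
    then show ?thesis
    proof cases
      case 1
      have "Or (g 0) \<in> g 1 - {Or (g 1)}" using a12 1 by simp
      then show ?thesis using a01 g0I g1I by blast
    next
      case 2
      have q2: "Or (g 2) \<in> g 1" using a12 by simp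
      have "Or (g 0) \<in> g 1"
        by (rule convex_mem[OF ih g1I q2 p1]) (use 2 le0 in linarith)+
      moreover have "Or (g 0) \<noteq> Or (g 1)" using a01 by simp
      ultimately have "Or (g 0) \<in> g 1 - {Or (g 1)}" by simp
      then show ?thesis using a01 g0I g1I by blast
    next
      case 3
      have le2: "Or (g 2) \<le> Or (g 1)" using gmx k3 by simp
      have q1: "Or (g 1) \<in> g 0" using a01 by simp
      have "Or (g 2) \<in> g 0"
        by (rule convex_mem[OF ih g0I p0 q1]) (use 3 le2 in linarith)+
      moreover have "Or (g 2) \<noteq> Or (g 0)" using 3 by simp
      ultimately have a02: "Or (g 2) \<in> g 0 - {Or (g 0)}" by simp
      define h where "h i = (if i = 0 then g 0 else g (Suc i))" for i
      have hI: "\<forall>i<k-1. h i \<in> \<I>" unfolding h_def using gI by auto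
      have harc: "\<forall>i<k-1. Or (h (Suc i mod (k-1))) \<in> h i - {Or (h i)}"
      proof (intro allI impI)
        fix i assume i: "i < k - 1"
        show "Or (h (Suc i mod (k-1))) \<in> h i - {Or (h i)}"
        proof (cases "Suc i < k - 1")
          case True
          then have "Suc i mod (k-1) = Suc i" by simp
          show ?thesis
          proof (cases "i = 0")
            case True
            then show ?thesis using a02 \<open>Suc i mod (k-1) = Suc i\<close> unfolding h_def
              by (simp add: numeral_2_eq_2)
          next
            case False
            have "Suc i < k" "Suc (Suc i) < k" using \<open>Suc i < k - 1\<close> by auto
            then have "Or (g (Suc (Suc i))) \<in> g (Suc i) - {Or (g (Suc i))}"
              using spec[OF garc, of "Suc i"] by simp
            then show ?thesis using False \<open>Suc i mod (k-1) = Suc i\<close> unfolding h_def by simp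
          qed
        next
          case False
          then have "Suc i = k - 1" using i by simp
          then have "Suc i mod (k-1) = 0" "Suc (Suc i) mod k = 0" "i \<noteq> 0" "Suc i < k"
            using k3 by auto
          then have "Or (g 0) \<in> g (Suc i) - {Or (g (Suc i))}"
            using spec[OF garc, of "Suc i"] by simp
          then show ?thesis using \<open>Suc i mod (k-1) = 0\<close> \<open>i \<noteq> 0\<close> unfolding h_def by simp
        qed
      qed
      have "k - 1 < k" "2 \<le> k - 1" using k3 by auto
      then show ?thesis using less.IH hI harc by blast
    qed
  qed
qed

theorem proposition3p6:
  fixes n :: nat and \<I> :: "nat set set" and Or :: "nat set \<Rightarrow> nat"
  assumes "interval_hypergraph n \<I>"
    and "orientation \<I> Or"
  shows "acyclic_orientation \<I> Or \<longleftrightarrow>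
         \<not> (\<exists>I\<in>\<I>. \<exists>J\<in>\<I>. Or I \<in> J - {Or J} \<and> Or J \<in> I - {Or I})"
proof
  assume a: "acyclic_orientation \<I> Or"
  show "\<not> (\<exists>I\<in>\<I>. \<exists>J\<in>\<I>. Or I \<in> J - {Or J} \<and> Or J \<in> I - {Or I})"
  proof
    assume "\<exists>I\<in>\<I>. \<exists>J\<in>\<I>. Or I \<in> J - {Or J} \<and> Or J \<in> I - {Or I}"
    then obtain I J where IJ: "I \<in> \<I>" "J \<in> \<I>" "Or I \<in> J - {Or J}" "Or J \<in> I - {Or I}" by blast
    have "2 \<le> length [I, J] \<and> set [I, J] \<subseteq> \<I> \<and>
          (\<forall>i. i + 1 < length [I, J] \<longrightarrow> Or ([I, J] ! (i + 1)) \<in> [I, J] ! i - {Or ([I, J] ! i)}) \<and>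
          Or ([I, J] ! 0) \<in> last [I, J] - {Or (last [I, J])}"
      using IJ by auto
    then show False using a unfolding acyclic_orientation_def by blast
  qed
next
  assume a: "\<not> (\<exists>I\<in>\<I>. \<exists>J\<in>\<I>. Or I \<in> J - {Or J} \<and> Or J \<in> I - {Or I})"
  show "acyclic_orientation \<I> Or"
    unfolding acyclic_orientation_def
  proof
    assume "\<exists>Hs. 2 \<le> length Hs \<and> set Hs \<subseteq> \<I> \<and>
          (\<forall>i. i + 1 < length Hs \<longrightarrow> Or (Hs ! (i + 1)) \<in> Hs ! i - {Or (Hs ! i)}) \<and>
          Or (Hs ! 0) \<in> last Hs - {Or (last Hs)}"
    then obtain Hs where H: "2 \<le> length Hs" "set Hs \<subseteq> \<I>"
      "\<forall>i. i + 1 < length Hs \<longrightarrow> Or (Hs ! (i + 1)) \<in> Hs ! i - {Or (Hs ! i)}"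
      "Or (Hs ! 0) \<in> last Hs - {Or (last Hs)}" by blast
    let ?k = "length Hs"
    have I: "\<forall>i<?k. Hs ! i \<in> \<I>" using H(2) by auto
    have C: "\<forall>i<?k. Or (Hs ! (Suc i mod ?k)) \<in> Hs ! i - {Or (Hs ! i)}"
    proof (intro allI impI)
      fix i assume i: "i < ?k"
      show "Or (Hs ! (Suc i mod ?k)) \<in> Hs ! i - {Or (Hs ! i)}"
      proof (cases "Suc i < ?k")
        case True then show ?thesis using H(3) by simp
      next
        case False
        then have "Suc i = ?k" using i by simp
        moreover have "last Hs = Hs ! (?k - 1)" using H(1) by (intro last_conv_nth) auto
        ultimately show ?thesis using H(4) \<open>Suc i = ?k\<close>
          by (metis diff_Suc_1 mod_self)
      qed
    qed
    show False using main_cycle[OF assms H(1) I C] a by blast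
  qed
qed

end
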